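(* For every integer $n\ge1$, \[ \sum_{\substack{m+k=n\\ m\ge1,\ k\ge0}}q_\psi(m)\,\Omega_m(k)=\begin{cases}-\omega(n)&\text{if } n \text{ is odd},\\ -\omega(n)+\omega(n/2)&\text{if } n\text{ is even}.\end{cases} \]
   Context: $q_\psi(n)$ is the number of partitions of $n$ into distinct parts whose parts have greatest common divisor $1$. $\omega:\mathbb{Z}\to\mathbb{Z}$ is defined by $\omega(0)=1$; $\omega(m)=(-1)^j$ if $m=\frac{3j^2\pm j}{2}$ for some integer $j\ge1$; $\omega(m)=0$ otherwise (in particular for $m<0$). For $m\ge1$ and integer $k$, $\Omega_m(k)=\sum_{j\ge0}\omega(k-jm)=\omega(k)+\omega(k-m)+\omega(k-2m)+\cdots$. *)

theory Defs
  imports Main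
begin

text \<open>Partitions of n into distinct parts = finite sets of positive integers with sum n.
  q_psi n counts those whose parts have gcd 1.\<close>
definition q_psi :: "nat \<Rightarrow> nat" where
  "q_psi n = card {S :: nat set. S \<subseteq> {1..n} \<and> \<Sum>S = n \<and> Gcd S = 1}"

definition omega :: "int \<Rightarrow> int" where
  "omega m = (if m = 0 then 1
     else if (\<exists>j::int. j \<ge> 1 \<and> (2 * m = 3 * j^2 + j \<or> 2 * m = 3 * j^2 - j))
     then (-1) ^ nat (THE j::int. j \<ge> 1 \<and> (2 * m = 3 * j^2 + j \<or> 2 * m = 3 * j^2 - j))
     else 0)"

text \<open>Omega m k = sum over j \<ge> 0 of omega (k - j m); only terms with k - j m \<ge> 0 can be nonzero.\<close>
definition Omega :: "nat \<Rightarrow> int \<Rightarrow> int" where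
  "Omega m k = (\<Sum>j \<in> {j::nat. int j * int m \<le> k}. omega (k - int j * int m))"

end

theory Submission
  imports Defs "HOL-Computational_Algebra.Formal_Power_Series"
begin

unbundle fps_syntax


definition tri :: "nat \<Rightarrow> nat" where "tri k = k * (k + 1) div 2"

lemma tri_Suc: "tri (Suc k) = tri k + Suc k"
  unfolding tri_def by (induction k) auto

lemma tri_0[simp]: "tri 0 = 0" by (simp add: tri_def)

definition TT :: "'a::comm_ring_1 \<Rightarrow> nat \<Rightarrow> nat \<Rightarrow> 'a" where
  "TT q n k = (-1)^k * q^(n*k + tri k) * (\<Prod>i\<in>{Suc k..n}. 1 - q^i)"

definition SS :: "'a::comm_ring_1 \<Rightarrow> nat \<Rightarrow> 'a" where
  "SS q n = (\<Sum>k=0..n. TT q n k)"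

definition pa :: "nat \<Rightarrow> nat" where "pa j = j * (3 * j - 1) div 2"
definition pb :: "nat \<Rightarrow> nat" where "pb j = j * (3 * j + 1) div 2"

definition pent :: "'a::comm_ring_1 \<Rightarrow> nat \<Rightarrow> 'a" where
  "pent q n = 1 + (\<Sum>j=1..n. (-1)^j * (q^(pa j) + q^(pb j)))"

lemma pa_Suc: "pa (Suc n) = n*n + 2*n + 1 + tri n"
proof -
  have "2 * pa (Suc n) = 2 * (n*n + 2*n + 1 + tri n)"
  proof -
    have e: "even (Suc n * (3 * Suc n - 1))" by auto
    have t: "2 * tri n = n * (n+1)" unfolding tri_def by auto
    show ?thesis unfolding pa_def using e t by (simp add: algebra_simps)
  qed
  thus ?thesis by simp
qed

lemma pb_Suc: "pb (Suc n) = (Suc n)*(Suc n) + tri (Suc n)"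
proof -
  have t: "2 * tri (Suc n) = Suc n * (Suc n+1)" unfolding tri_def by auto
  have e: "even (Suc n * (3 * Suc n + 1))" by auto
  have "2 * pb (Suc n) = 2 * ((Suc n)*(Suc n) + tri (Suc n))"
    unfolding pb_def using e t by (simp add: algebra_simps)
  thus ?thesis by simp
qed

lemma TT_rel:
  assumes "Suc m \<le> n"
  shows "(1 - q^Suc m) * TT q n (Suc m) = - (q^(n+m+1) * TT q n m)"
proof -
  have p: "(\<Prod>i\<in>{Suc m..n}. 1 - q^i) = (1 - q^Suc m) * (\<Prod>i\<in>{Suc (Suc m)..n}. 1 - q^i)"
    using assms by (simp add: prod.atLeast_Suc_atMost)
  show ?thesis unfolding TT_def p tri_Suc
    by (simp add: algebra_simps power_add)
qed

lemma TT_Suc: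
  assumes "k \<le> n"
  shows "TT q (Suc n) k = q^k * (1 - q^Suc n) * TT q n k"
proof -
  have p: "(\<Prod>i\<in>{Suc k..Suc n}. 1 - q^i) = (\<Prod>i\<in>{Suc k..n}. 1 - q^i) * (1 - q^Suc n)"
    using assms by (simp add: prod.nat_ivl_Suc')
  show ?thesis unfolding TT_def p
    by (simp add: algebra_simps power_add)
qed

lemma tele:
  assumes "m \<le> n"
  shows "(\<Sum>k=0..m. TT q n k * (q^k * (1 - q^Suc n) - 1)) = - (q^(n+1+m) * TT q n m)"
  using assms
proof (induction m)
  case 0
  then show ?case by (simp add: algebra_simps)
next
  case (Suc m)
  have r: "(1 - q^Suc m) * TT q n (Suc m) = - (q^(n+m+1) * TT q n m)"
    using TT_rel Suc.prems by blast
  have "(\<Sum>k=0..Suc m. TT q n k * (q^k * (1 - q^Suc n) - 1))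
     = - (q^(n+1+m) * TT q n m) + TT q n (Suc m) * (q^Suc m * (1 - q^Suc n) - 1)"
    using Suc by simp
  also have "\<dots> = - (q^(n+1+Suc m) * TT q n (Suc m))"
  proof -
    have "TT q n (Suc m) * (q^Suc m * (1 - q^Suc n) - 1) =
       - ((1 - q^Suc m) * TT q n (Suc m)) - q^(n+1+Suc m) * TT q n (Suc m)"
      by (simp add: algebra_simps power_add)
    then show ?thesis using r by (simp add: algebra_simps)
  qed
  finally show ?case .
qed

lemma shanks: "SS q n = pent q n"
proof (induction n)
  case 0
  then show ?case by (simp add: SS_def pent_def TT_def)
next
  case (Suc n)
  have "SS q (Suc n) = (\<Sum>k=0..n. TT q (Suc n) k) + TT q (Suc n) (Suc n)"
    by (simp add: SS_def)
  also have "(\<Sum>k=0..n. TT q (Suc n) k) = (\<Sum>k=0..n. q^k * (1 - q^Suc n) * TT q n k)"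
    by (rule sum.cong) (auto simp: TT_Suc)
  also have "\<dots> = SS q n + (\<Sum>k=0..n. TT q n k * (q^k * (1 - q^Suc n) - 1))"
    by (simp add: SS_def sum.distrib[symmetric] algebra_simps)
  also have "\<dots> = SS q n + - (q^(n+1+n) * TT q n n)"
    by (subst tele) auto
  finally have "SS q (Suc n) = SS q n + - (q^(n+1+n) * TT q n n) + TT q (Suc n) (Suc n)" .
  also have "- (q^(n+1+n) * TT q n n) = (-1)^(Suc n) * q^(pa (Suc n))"
    by (simp add: TT_def pa_Suc power_add algebra_simps mult_2_right)
  also have "TT q (Suc n) (Suc n) = (-1)^(Suc n) * q^(pb (Suc n))"
    by (simp add: TT_def pb_Suc)
  finally show ?case using Suc by (simp add: pent_def algebra_simps)
qed


lemma two_pa: "2 * pa j = j * (3 * j - 1)"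
proof -
  have "even (j * (3 * j - 1))" by (cases "even j") auto
  thus ?thesis unfolding pa_def by simp
qed

lemma two_pb: "2 * pb j = j * (3 * j + 1)"
proof -
  have "even (j * (3 * j + 1))" by (cases "even j") auto
  thus ?thesis unfolding pb_def by simp
qed

lemma pa_int: "j \<ge> 1 \<Longrightarrow> 2 * int (pa j) = 3 * int j ^ 2 - int j"
proof -
  assume j: "j \<ge> 1"
  have "int (2 * pa j) = int (j * (3 * j - 1))" using two_pa by simp
  also have "\<dots> = int j * (3 * int j - 1)" using j by (simp add: of_nat_diff)
  finally show ?thesis by (simp add: algebra_simps power2_eq_square)
qed

lemma pb_int: "2 * int (pb j) = 3 * int j ^ 2 + int j"
proof -
  have "int (2 * pb j) = int (j * (3 * j + 1))" using two_pb by simp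
  also have "\<dots> = int j * (3 * int j + 1)" by (simp add: ring_distribs)
  finally show ?thesis by (simp add: algebra_simps power2_eq_square)
qed

lemma pa_ge: "j \<ge> 1 \<Longrightarrow> pa j \<ge> j"
proof -
  assume j: "j \<ge> 1"
  have "3 * j - 1 \<ge> 2" using j by simp
  hence "j * (3 * j - 1) \<ge> j * 2" by (rule mult_le_mono2)
  hence "2 * pa j \<ge> 2 * j" unfolding two_pa by simp
  thus ?thesis by simp
qed

lemma pb_ge: "pb j \<ge> j"
proof -
  have "2 * pb j \<ge> 2 * j" unfolding two_pb by simp
  thus ?thesis by simp
qed

lemma pent_uniq:
  fixes j k m :: int
  assumes "j \<ge> 1" "k \<ge> 1"
    and "2 * m = 3 * j^2 + j \<or> 2 * m = 3 * j^2 - j"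
    and "2 * m = 3 * k^2 + k \<or> 2 * m = 3 * k^2 - k"
  shows "j = k"
proof -
  have c1: "j = k" if "3 * j^2 + j = 3 * k^2 + k"
  proof -
    have "(j - k) * (3*j + 3*k + 1) = 0" using that by (simp add: algebra_simps power2_eq_square)
    moreover have "3*j + 3*k + 1 \<noteq> 0" using assms by simp
    ultimately show ?thesis by simp
  qed
  have c2: "j = k" if "3 * j^2 - j = 3 * k^2 - k"
  proof -
    have "(j - k) * (3*j + 3*k - 1) = 0" using that by (simp add: algebra_simps power2_eq_square)
    moreover have "3*j + 3*k - 1 \<noteq> 0" using assms by simp
    ultimately show ?thesis by simp
  qed
  have c3: False if "3 * j^2 + j = 3 * k^2 - k"
  proof -
    have "(3 * (j - k) + 1) * (j + k) = 0" using that by (simp add: algebra_simps power2_eq_square)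
    moreover have "j + k \<noteq> 0" using assms by simp
    moreover have "3 * (j - k) + 1 \<noteq> 0" by presburger
    ultimately show False by simp
  qed
  have c4: False if "3 * j^2 - j = 3 * k^2 + k"
  proof -
    have "(3 * (j - k) - 1) * (j + k) = 0" using that by (simp add: algebra_simps power2_eq_square)
    moreover have "j + k \<noteq> 0" using assms by simp
    moreover have "3 * (j - k) - 1 \<noteq> 0" by presburger
    ultimately show False by simp
  qed
  show ?thesis using assms(3,4) c1 c2 c3 c4 by auto
qed


lemma omega_char:
  assumes "m \<le> M"
  shows "omega (int m) = (if m = 0 then 1 else 0) +
     (\<Sum>j=1..M. (-1)^j * ((if pa j = m then 1 else 0) + (if pb j = m then 1 else 0)))"
proof (cases "m = 0")
  case True
  have "(\<Sum>j=1..M. (-1::int)^j * ((if pa j = m then 1 else 0) + (if pb j = m then 1 else 0))) = 0"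
  proof (rule sum.neutral, clarify)
    fix j assume "j \<in> {1..M}"
    hence "pa j \<ge> 1" "pb j \<ge> 1" using pa_ge[of j] pb_ge[of j] by auto
    thus "(-1::int)^j * ((if pa j = m then 1 else 0) + (if pb j = m then 1 else 0)) = 0"
      using True by simp
  qed
  thus ?thesis using True by (simp add: omega_def)
next
  case m0: False
  define P where "P = (\<lambda>j::int. j \<ge> 1 \<and> (2 * int m = 3 * j^2 + j \<or> 2 * int m = 3 * j^2 - j))"
  have Pa: "P (int i)" if "i \<ge> 1" "pa i = m" for i
    using pa_int[of i] that unfolding P_def by auto
  have Pb: "P (int i)" if "i \<ge> 1" "pb i = m" for i
    using pb_int[of i] that unfolding P_def by auto
  show ?thesis
  proof (cases "\<exists>j. P j")
    case True
    then obtain j where Pj: "P j" by blast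
    have the: "(THE j. P j) = j"
      by (rule the_equality[where P=P, OF Pj]) (use Pj pent_uniq in \<open>auto simp: P_def\<close>)
    have om: "omega (int m) = (-1)^nat j"
      using m0 Pj the unfolding omega_def P_def[symmetric] by auto
    define j0 where "j0 = nat j"
    have jj: "int j0 = j" "j0 \<ge> 1" using Pj unfolding j0_def P_def by auto
    have other: "(if pa i = m then 1 else 0) + (if pb i = m then 1 else (0::int)) = 0"
      if "i \<in> {1..M}" "i \<noteq> j0" for i
    proof -
      have "pa i \<noteq> m"
      proof
        assume "pa i = m"
        hence "P (int i)" using Pa that by auto
        hence "int i = j" using pent_uniq Pj unfolding P_def by blast
        thus False using that jj by auto
      qed
      moreover have "pb i \<noteq> m"
      proof
        assume "pb i = m"
        hence "P (int i)" using Pb that by auto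
        hence "int i = j" using pent_uniq Pj unfolding P_def by blast
        thus False using that jj by auto
      qed
      ultimately show ?thesis by simp
    qed
    have one: "(if pa j0 = m then 1 else 0) + (if pb j0 = m then 1 else (0::int)) = 1"
    proof -
      have A: "2 * int (pa j0) = 3 * j^2 - j" using pa_int[of j0] jj by simp
      have B: "2 * int (pb j0) = 3 * j^2 + j" using pb_int[of j0] jj by simp
      have "pa j0 \<noteq> pb j0" using A B jj by auto
      moreover have "pa j0 = m \<or> pb j0 = m" using A B Pj unfolding P_def by auto
      ultimately show ?thesis by auto
    qed
    have j0M: "j0 \<in> {1..M}"
    proof -
      have "pa j0 = m \<or> pb j0 = m" using one by (auto split: if_splits)
      hence "j0 \<le> m" using pa_ge[of j0] pb_ge[of j0] jj by auto
      thus ?thesis using jj assms by auto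
    qed
    have "(\<Sum>i=1..M. (-1::int)^i * ((if pa i = m then 1 else 0) + (if pb i = m then 1 else 0)))
        = (-1)^j0 * ((if pa j0 = m then 1 else 0) + (if pb j0 = m then 1 else 0)) +
          (\<Sum>i\<in>{1..M} - {j0}. (-1::int)^i * ((if pa i = m then 1 else 0) + (if pb i = m then 1 else 0)))"
      using j0M by (simp add: sum.remove)
    also have "(\<Sum>i\<in>{1..M} - {j0}. (-1::int)^i * ((if pa i = m then 1 else 0) + (if pb i = m then 1 else 0))) = 0"
      by (rule sum.neutral) (use other in auto)
    finally show ?thesis using one om m0 j0_def by simp
  next
    case False
    have om: "omega (int m) = 0"
      using m0 False unfolding omega_def P_def[symmetric] by auto
    have "(\<Sum>i=1..M. (-1::int)^i * ((if pa i = m then 1 else 0) + (if pb i = m then 1 else 0))) = 0"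
    proof (rule sum.neutral, clarify)
      fix i assume i: "i \<in> {1..M}"
      have "pa i \<noteq> m" using Pa[of i] i False by auto
      moreover have "pb i \<noteq> m" using Pb[of i] i False by auto
      ultimately show "(-1::int)^i * ((if pa i = m then 1 else 0) + (if pb i = m then 1 else 0)) = 0" by simp
    qed
    thus ?thesis using om m0 by simp
  qed
qed


lemma neg1_pow_nth: "((-1::int fps)^j * f) $ m = (-1)^j * f $ m"
  by (induction j) (auto simp: algebra_simps)

lemma pent_nth:
  fixes r :: nat
  shows "pent ((fps_X::int fps)^r) N $ m = (if m = 0 then 1 else 0) +
     (\<Sum>j=1..N. (-1)^j * ((if m = r * pa j then 1 else 0) + (if m = r * pb j then 1 else 0)))"
  unfolding pent_def by (simp add: fps_sum_nth neg1_pow_nth power_mult[symmetric])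

lemma pent_coeff:
  assumes "r \<ge> 1" "m \<le> N"
  shows "pent ((fps_X::int fps)^r) N $ m = (if r dvd m then omega (int (m div r)) else 0)"
proof (cases "r dvd m")
  case True
  then obtain m' where m': "m = r * m'" by blast
  have "m' \<le> r * m'" using assms(1) by (cases r) auto
  hence m'N: "m' \<le> N" using assms m' by linarith
  have A: "\<And>x. (m = r * x) = (x = m')" using m' assms by auto
  have B: "(m = 0) = (m' = 0)" using m' assms by auto
  have "pent ((fps_X::int fps)^r) N $ m = omega (int m')"
    unfolding pent_nth A B by (rule omega_char[OF m'N, symmetric])
  moreover have "m div r = m'" using m' assms by simp
  ultimately show ?thesis using True by simp
next
  case False
  hence B: "(m = 0) = False" by (metis dvd_0_right)
  have A: "\<And>x. (m = r * x) = False" using False by auto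
  show ?thesis unfolding pent_nth A B using False by simp
qed


lemma tri_pos: "k \<ge> 1 \<Longrightarrow> tri k \<ge> 1"
  by (cases k) (auto simp: tri_Suc)

lemma TT_nth_zero:
  fixes r :: nat
  assumes "r \<ge> 1" "m \<le> N" "k \<ge> 1"
  shows "TT ((fps_X::int fps)^r) N k $ m = 0"
proof -
  let ?e = "r * (N * k + tri k)"
  have "TT ((fps_X::int fps)^r) N k = fps_X^?e * ((-1)^k * (\<Prod>i\<in>{Suc k..N}. 1 - (fps_X^r)^i))"
  proof -
    have pw: "((fps_X::int fps)^r)^(N*k+tri k) = fps_X^?e" by (simp add: power_mult)
    show ?thesis unfolding TT_def pw by (simp add: ac_simps)
  qed
  moreover have "m < ?e"
  proof -
    have "N \<le> N * k" using assms by simp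
    hence "m < N * k + tri k" using assms tri_pos[of k] by linarith
    moreover have "N * k + tri k \<le> ?e" using assms(1) by (cases r) auto
    ultimately show ?thesis by linarith
  qed
  ultimately show ?thesis by (simp add: fps_X_power_mult_nth)
qed

lemma prod_coeff:
  fixes r :: nat
  assumes "r \<ge> 1" "m \<le> N"
  shows "(\<Prod>i=1..N. 1 - ((fps_X::int fps)^r)^i) $ m = (if r dvd m then omega (int (m div r)) else 0)"
proof -
  let ?q = "(fps_X::int fps)^r"
  have "SS ?q N $ m = TT ?q N 0 $ m + (\<Sum>k=1..N. TT ?q N k $ m)"
    unfolding SS_def fps_sum_nth by (simp add: sum.atLeast_Suc_atMost)
  also have "(\<Sum>k=1..N. TT ?q N k $ m) = 0"
    by (rule sum.neutral) (use TT_nth_zero assms in auto)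
  also have "TT ?q N 0 = (\<Prod>i=1..N. 1 - ?q^i)" by (simp add: TT_def)
  finally have "(\<Prod>i=1..N. 1 - ?q^i) $ m = SS ?q N $ m" by simp
  also have "\<dots> = pent ?q N $ m" by (simp add: shanks)
  finally show ?thesis using pent_coeff assms by simp
qed


lemma Qcoeff:
  assumes "finite A" "0 \<notin> A"
  shows "(\<Prod>i\<in>A. 1 + (fps_X::int fps)^i) $ m = int (card {S. S \<subseteq> A \<and> \<Sum>S = m})"
  using assms
proof (induction A arbitrary: m rule: finite_induct)
  case empty
  have "{S. S \<subseteq> {} \<and> \<Sum>S = m} = (if m = 0 then {{}} else {})" by auto
  then show ?case by simp
next
  case (insert a A)
  have IH: "\<And>m. (\<Prod>i\<in>A. 1 + (fps_X::int fps)^i) $ m = int (card {S. S \<subseteq> A \<and> \<Sum>S = m})"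
    using insert by auto
  let ?P = "(\<Prod>i\<in>A. 1 + (fps_X::int fps)^i)"
  have "(\<Prod>i\<in>insert a A. 1 + (fps_X::int fps)^i) $ m = ?P $ m + (fps_X^a * ?P) $ m"
    using insert by (simp add: algebra_simps)
  also have "\<dots> = ?P $ m + (if m < a then 0 else ?P $ (m - a))"
    by (simp add: fps_X_power_mult_nth)
  finally have L0: "(\<Prod>i\<in>insert a A. 1 + (fps_X::int fps)^i) $ m = ?P $ m + (if m < a then 0 else ?P $ (m - a))" .
  have L1: "?P $ m + (if m < a then 0 else ?P $ (m - a)) =
      int (card {S. S \<subseteq> A \<and> \<Sum>S = m}) + int (card {S. S \<subseteq> A \<and> \<Sum>S + a = m})"
  proof -
    have "{S. S \<subseteq> A \<and> \<Sum>S + a = m} = (if m < a then {} else {S. S \<subseteq> A \<and> \<Sum>S = m - a})"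
      by auto
    thus "?P $ m + (if m < a then 0 else ?P $ (m - a)) =
      int (card {S. S \<subseteq> A \<and> \<Sum>S = m}) + int (card {S. S \<subseteq> A \<and> \<Sum>S + a = m})"
      using IH by simp
  qed
  have fin1: "finite {S. S \<subseteq> A \<and> \<Sum>S = m}"
    by (rule finite_subset[of _ "Pow A"]) (use insert in auto)
  have fin2: "finite {S. S \<subseteq> A \<and> \<Sum>S + a = m}"
    by (rule finite_subset[of _ "Pow A"]) (use insert in auto)
  have split: "{S. S \<subseteq> insert a A \<and> \<Sum>S = m} =
     {S. S \<subseteq> A \<and> \<Sum>S = m} \<union> insert a ` {S. S \<subseteq> A \<and> \<Sum>S + a = m}"
  proof (intro equalityI subsetI)
    fix S assume S: "S \<in> {S. S \<subseteq> insert a A \<and> \<Sum>S = m}"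
    show "S \<in> {S. S \<subseteq> A \<and> \<Sum>S = m} \<union> insert a ` {S. S \<subseteq> A \<and> \<Sum>S + a = m}"
    proof (cases "a \<in> S")
      case True
      have fS: "finite (S - {a})" using S insert(1) finite_subset by blast
      have "S = insert a (S - {a})" using True by auto
      moreover have "\<Sum>(S - {a}) + a = m" using S True fS
        by (metis (mono_tags, lifting) add.commute mem_Collect_eq sum.remove finite_Diff2 finite_insert
            insert_Diff)
      moreover have "S - {a} \<subseteq> A" using S by auto
      ultimately show ?thesis by blast
    next
      case False
      then show ?thesis using S by auto
    qed
  next
    fix S assume S: "S \<in> {S. S \<subseteq> A \<and> \<Sum>S = m} \<union> insert a ` {S. S \<subseteq> A \<and> \<Sum>S + a = m}"
    show "S \<in> {S. S \<subseteq> insert a A \<and> \<Sum>S = m}"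
    proof (cases "S \<in> {S. S \<subseteq> A \<and> \<Sum>S = m}")
      case True then show ?thesis by auto
    next
      case False
      then obtain T where T: "T \<subseteq> A" "\<Sum>T + a = m" "S = insert a T" using S by auto
      have "finite T" using T insert(1) finite_subset by blast
      moreover have "a \<notin> T" using T insert(2) by auto
      ultimately have "\<Sum>S = a + \<Sum>T" using T by simp
      then show ?thesis using T by auto
    qed
  qed
  have disj: "{S. S \<subseteq> A \<and> \<Sum>S = m} \<inter> insert a ` {S. S \<subseteq> A \<and> \<Sum>S + a = m} = {}"
    using insert(2) by auto
  have inj: "inj_on (insert a) {S. S \<subseteq> A \<and> \<Sum>S + a = m}"
    unfolding inj_on_def using insert(2) by (metis (no_types, lifting) insert_ident mem_Collect_eq subset_iff)
  have "card {S. S \<subseteq> insert a A \<and> \<Sum>S = m} =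
      card {S. S \<subseteq> A \<and> \<Sum>S = m} + card {S. S \<subseteq> A \<and> \<Sum>S + a = m}"
    unfolding split using fin1 fin2 disj inj by (simp add: card_Un_disjoint card_image)
  then show ?case using L0 L1 by simp
qed


lemma sum_mult_image:
  fixes d :: nat
  assumes "d \<ge> 1" "finite T"
  shows "\<Sum>((*) d ` T) = d * \<Sum>T"
proof -
  have "inj_on ((*) d) T" using assms by (auto simp: inj_on_def)
  hence "\<Sum>((*) d ` T) = (\<Sum>x\<in>T. d * x)" by (simp add: sum.reindex)
  thus ?thesis by (simp add: sum_distrib_left)
qed

lemma Gcd_mult_nat: "Gcd ((*) (d::nat) ` T) = d * Gcd T"
  by (simp add: Gcd_mult)

lemma scale_image:
  fixes d m :: nat
  assumes d: "d \<ge> 1"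
  shows "(\<lambda>T. (*) d ` T) ` {T. T \<subseteq> {1..m} \<and> \<Sum>T = m \<and> Gcd T = 1} =
         {S. S \<subseteq> {1..d*m} \<and> \<Sum>S = d*m \<and> Gcd S = d}"
proof (intro equalityI subsetI)
  fix S assume "S \<in> (\<lambda>T. (*) d ` T) ` {T. T \<subseteq> {1..m} \<and> \<Sum>T = m \<and> Gcd T = 1}"
  then obtain T where T: "T \<subseteq> {1..m}" "\<Sum>T = m" "Gcd T = 1" "S = (*) d ` T" by auto
  have fT: "finite T" using T(1) finite_subset by blast
  have "S \<subseteq> {1..d*m}" using T(1) T(4) d by auto
  moreover have "\<Sum>S = d*m" using sum_mult_image[OF d fT] T by simp
  moreover have "Gcd S = d" using T Gcd_mult_nat by simp
  ultimately show "S \<in> {S. S \<subseteq> {1..d*m} \<and> \<Sum>S = d*m \<and> Gcd S = d}" by simp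
next
  fix S assume "S \<in> {S. S \<subseteq> {1..d*m} \<and> \<Sum>S = d*m \<and> Gcd S = d}"
  hence S: "S \<subseteq> {1..d*m}" "\<Sum>S = d*m" "Gcd S = d" by auto
  have dv: "d dvd x" if "x \<in> S" for x using S(3) that by (metis Gcd_dvd)
  define T where "T = (\<lambda>x. x div d) ` S"
  have ST: "S = (*) d ` T"
  proof -
    have "(*) d ` T = (\<lambda>x. d * (x div d)) ` S" unfolding T_def by (simp add: image_image)
    also have "\<dots> = (\<lambda>x. x) ` S" by (rule image_cong) (use dv in auto)
    finally show ?thesis by simp
  qed
  have fT: "finite T" unfolding T_def using S(1) finite_subset by blast
  have T1: "T \<subseteq> {1..m}"
  proof
    fix y assume "y \<in> T"
    then obtain x where x: "x \<in> S" "y = x div d" unfolding T_def by auto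
    have "x \<ge> 1" "x \<le> d * m" using x S(1) by auto
    moreover have "x = d * y" using dv[OF x(1)] x(2) by simp
    ultimately have "1 \<le> y" "d * y \<le> d * m" by (cases y; auto)+
    thus "y \<in> {1..m}" using d by simp
  qed
  have "d * \<Sum>T = d * m" using sum_mult_image[OF d fT] ST S(2) by simp
  hence T2: "\<Sum>T = m" using d by simp
  have "d * Gcd T = d" using Gcd_mult_nat[of d T] ST S(3) by simp
  hence T3: "Gcd T = 1" using d by simp
  show "S \<in> (\<lambda>T. (*) d ` T) ` {T. T \<subseteq> {1..m} \<and> \<Sum>T = m \<and> Gcd T = 1}"
    using ST T1 T2 T3 by blast
qed

lemma card_scale:
  fixes d m :: nat
  assumes d: "d \<ge> 1"
  shows "card {S. S \<subseteq> {1..d*m} \<and> \<Sum>S = d*m \<and> Gcd S = d} = q_psi m"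
proof -
  have "inj_on (\<lambda>T. (*) d ` T) {T. T \<subseteq> {1..m} \<and> \<Sum>T = m \<and> Gcd T = 1}"
  proof (rule inj_onI)
    fix A B :: "nat set" assume "(*) d ` A = (*) d ` B"
    moreover have "inj ((*) d)" using d by (auto simp: inj_on_def)
    ultimately show "A = B" by (simp add: inj_image_eq_iff)
  qed
  hence "card ((\<lambda>T. (*) d ` T) ` {T. T \<subseteq> {1..m} \<and> \<Sum>T = m \<and> Gcd T = 1}) = q_psi m"
    unfolding q_psi_def by (simp add: card_image)
  thus ?thesis using scale_image[OF d] by simp
qed




lemma div_div_dvd: "(m::nat) dvd t \<Longrightarrow> t \<ge> 1 \<Longrightarrow> t div (t div m) = m"
proof -
  assume "m dvd t" "t \<ge> 1"
  then obtain k where k: "t = m * k" by blast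
  hence "m > 0" "k > 0" using \<open>t \<ge> 1\<close> by (auto intro!: Nat.gr0I)
  thus ?thesis using k by simp
qed

lemma qd_divisors:
  assumes t: "t \<ge> 1"
  shows "card {S. S \<subseteq> {1..t} \<and> \<Sum>S = t} = (\<Sum>m\<in>{m\<in>{1..t}. m dvd t}. q_psi m)"
proof -
  define D where "D = {m\<in>{1..t}. m dvd t}"
  define B where "B = (\<lambda>m. {S. S \<subseteq> {1..t} \<and> \<Sum>S = t \<and> Gcd S = t div m})"
  have U: "{S. S \<subseteq> {1..t} \<and> \<Sum>S = t} = (\<Union>m\<in>D. B m)"
  proof (intro equalityI subsetI)
    fix S assume S: "S \<in> {S. S \<subseteq> {1..t} \<and> \<Sum>S = t}"
    define g where "g = Gcd S"
    have "S \<noteq> {}" using S t by auto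
    hence "\<not> S \<subseteq> {0}" using S by auto
    hence g0: "g \<noteq> 0" unfolding g_def by (simp add: Gcd_0_iff)
    have "g dvd \<Sum>S" unfolding g_def by (rule dvd_sum) (simp add: Gcd_dvd)
    hence gt: "g dvd t" using S by simp
    define m where "m = t div g"
    have tm: "t = g * m" unfolding m_def using gt by simp
    have "m \<ge> 1" using tm t by (cases m) auto
    moreover have "m \<le> t" using tm g0 by simp
    moreover have "m dvd t" using tm by simp
    ultimately have "m \<in> D" unfolding D_def by simp
    moreover have "t div m = g" using tm \<open>m \<ge> 1\<close> by simp
    ultimately have "S \<in> B m" using S unfolding B_def g_def by auto
    thus "S \<in> (\<Union>m\<in>D. B m)" using \<open>m \<in> D\<close> by blast
  next
    fix S assume "S \<in> (\<Union>m\<in>D. B m)"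
    thus "S \<in> {S. S \<subseteq> {1..t} \<and> \<Sum>S = t}" unfolding B_def by auto
  qed
  have finD: "finite D" unfolding D_def by simp
  have finB: "\<forall>m\<in>D. finite (B m)"
    unfolding B_def by (auto intro: finite_subset[of _ "Pow {1..t}"])
  have disj: "\<forall>m\<in>D. \<forall>m'\<in>D. m \<noteq> m' \<longrightarrow> B m \<inter> B m' = {}"
  proof (intro ballI impI)
    fix m m' assume mm: "m \<in> D" "m' \<in> D" "m \<noteq> m'"
    have "t div m \<noteq> t div m'"
      using mm div_div_dvd[of m t] div_div_dvd[of m' t] t unfolding D_def by auto
    thus "B m \<inter> B m' = {}" unfolding B_def by auto
  qed
  have cB: "card (B m) = q_psi m" if "m \<in> D" for m
  proof -
    have m: "m \<ge> 1" "m dvd t" using that unfolding D_def by auto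
    define d where "d = t div m"
    have td: "t = d * m" unfolding d_def using m by simp
    have "d \<ge> 1" using td t by (cases d) auto
    have "B m = {S. S \<subseteq> {1..d*m} \<and> \<Sum>S = d*m \<and> Gcd S = d}"
      by (unfold B_def td[symmetric], unfold d_def, rule refl)
    with card_scale[OF \<open>d \<ge> 1\<close>, of m] show ?thesis by simp
  qed
  have "card {S. S \<subseteq> {1..t} \<and> \<Sum>S = t} = (\<Sum>m\<in>D. card (B m))"
    unfolding U using finD finB disj by (rule card_UN_disjoint)
  also have "\<dots> = (\<Sum>m\<in>D. q_psi m)" by (rule sum.cong) (auto simp: cB)
  finally show ?thesis unfolding D_def .
qed


lemma Ecoef: "m \<le> N \<Longrightarrow> (\<Prod>i=1..N. 1 - (fps_X::int fps)^i) $ m = omega (int m)"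
  using prod_coeff[of 1 m N] by simp

lemma Qcoef_pos:
  assumes "1 \<le> t" "t \<le> N"
  shows "(\<Prod>i=1..N. 1 + (fps_X::int fps)^i) $ t = (\<Sum>m\<in>{m\<in>{1..t}. m dvd t}. int (q_psi m))"
proof -
  have "(\<Prod>i=1..N. 1 + (fps_X::int fps)^i) $ t = int (card {S. S \<subseteq> {1..N} \<and> \<Sum>S = t})"
    by (rule Qcoeff) auto
  also have "{S. S \<subseteq> {1..N} \<and> \<Sum>S = t} = {S. S \<subseteq> {1..t} \<and> \<Sum>S = t}"
  proof (intro equalityI subsetI)
    fix S assume S: "S \<in> {S. S \<subseteq> {1..N} \<and> \<Sum>S = t}"
    have "finite S" using S finite_subset by blast
    hence "x \<le> t" if "x \<in> S" for x using S that member_le_sum[of x S "\<lambda>x. x"] by auto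
    thus "S \<in> {S. S \<subseteq> {1..t} \<and> \<Sum>S = t}" using S by auto
  next
    fix S assume "S \<in> {S. S \<subseteq> {1..t} \<and> \<Sum>S = t}"
    thus "S \<in> {S. S \<subseteq> {1..N} \<and> \<Sum>S = t}" using assms by auto
  qed
  also have "int (card {S. S \<subseteq> {1..t} \<and> \<Sum>S = t}) = (\<Sum>m\<in>{m\<in>{1..t}. m dvd t}. int (q_psi m))"
    using qd_divisors[OF assms(1)] by simp
  finally show ?thesis .
qed

lemma Qcoef0: "(\<Prod>i=1..N. 1 + (fps_X::int fps)^i) $ 0 = 1"
proof -
  have "(\<Prod>i=1..N. 1 + (fps_X::int fps)^i) $ 0 = int (card {S. S \<subseteq> {1..N} \<and> \<Sum>S = 0})"
    by (rule Qcoeff) auto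
  also have "{S. S \<subseteq> {1..N} \<and> \<Sum>S = 0} = {{}}"
  proof (intro equalityI subsetI)
    fix S assume S: "S \<in> {S. S \<subseteq> {1..N} \<and> \<Sum>S = 0}"
    have "finite S" using S finite_subset by blast
    hence "S = {}" using S by auto
    thus "S \<in> {{}}" by simp
  qed auto
  finally show ?thesis by simp
qed

lemma EQ: "(\<Prod>i=1..N. 1 + (fps_X::int fps)^i) * (\<Prod>i=1..N. 1 - (fps_X::int fps)^i)
   = (\<Prod>i=1..N. 1 - ((fps_X::int fps)^2)^i)"
proof -
  have "(1 + x^i) * (1 - x^i) = 1 - (x^2)^i" for x :: "int fps" and i
  proof -
    have "(x^2)^i = (x^i)^2" by (metis power_mult mult.commute)
    thus ?thesis by (simp add: algebra_simps power2_eq_square)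
  qed
  thus ?thesis by (simp add: prod.distrib[symmetric])
qed

lemma Omega_expand:
  assumes "m \<in> {1..N}"
  shows "Omega m (int N - int m) =
     (\<Sum>t\<in>{1..N}. if m dvd t then (\<Prod>i=1..N. 1 - (fps_X::int fps)^i) $ (N - t) else 0)"
proof -
  let ?E = "(\<Prod>i=1..N. 1 - (fps_X::int fps)^i)"
  have m1: "m \<ge> 1" using assms by simp
  have setj: "{j::nat. int j * int m \<le> int N - int m} = {j. (j+1)*m \<le> N}"
  proof -
    have "(int j * int m \<le> int N - int m) = ((j+1)*m \<le> N)" for j
    proof -
      have "int ((j+1)*m) = int j * int m + int m" by (simp add: algebra_simps)
      moreover have "((j+1)*m \<le> N) = (int ((j+1)*m) \<le> int N)" by (rule of_nat_le_iff[symmetric])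
      ultimately show ?thesis by linarith
    qed
    thus ?thesis by simp
  qed
  have "Omega m (int N - int m) = (\<Sum>j\<in>{j. (j+1)*m \<le> N}. omega (int N - int m - int j * int m))"
    unfolding Omega_def setj ..
  also have "\<dots> = (\<Sum>j\<in>{j. (j+1)*m \<le> N}. ?E $ (N - (j+1)*m))"
  proof (rule sum.cong)
    fix j assume "j \<in> {j. (j+1)*m \<le> N}"
    hence j: "(j+1)*m \<le> N" by simp
    have "int N - int m - int j * int m = int (N - (j+1)*m)"
      using j by (simp add: of_nat_diff algebra_simps)
    thus "omega (int N - int m - int j * int m) = ?E $ (N - (j+1)*m)"
      using Ecoef[of "N - (j+1)*m" N] by simp
  qed simp
  also have "\<dots> = (\<Sum>t\<in>(\<lambda>j. (j+1)*m) ` {j. (j+1)*m \<le> N}. ?E $ (N - t))"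
  proof -
    have inj: "inj_on (\<lambda>j. (j+1)*m) {j. (j+1)*m \<le> N}" using m1 by (auto simp: inj_on_def)
    show ?thesis by (simp only: sum.reindex[OF inj] o_def)
  qed
  also have "(\<lambda>j. (j+1)*m) ` {j. (j+1)*m \<le> N} = {t\<in>{1..N}. m dvd t}"
  proof (intro equalityI subsetI)
    fix t assume "t \<in> (\<lambda>j. (j+1)*m) ` {j. (j+1)*m \<le> N}"
    then obtain j where "t = (j+1)*m" "(j+1)*m \<le> N" by auto
    thus "t \<in> {t\<in>{1..N}. m dvd t}" using m1 by auto
  next
    fix t assume t: "t \<in> {t\<in>{1..N}. m dvd t}"
    then obtain k where k: "t = m * k" by auto
    have "k \<ge> 1" using t k by (cases k) auto
    hence "t = (k - 1 + 1) * m" "(k - 1 + 1) * m \<le> N" using k t by (auto simp: mult.commute)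
    thus "t \<in> (\<lambda>j. (j+1)*m) ` {j. (j+1)*m \<le> N}" by blast
  qed
  also have "(\<Sum>t\<in>{t\<in>{1..N}. m dvd t}. ?E $ (N - t)) =
      (\<Sum>t\<in>{1..N}. if m dvd t then ?E $ (N - t) else 0)"
    by (rule sum.inter_filter) simp
  finally show ?thesis .
qed

theorem mainTheorem9:
  fixes n :: nat
  assumes "n \<ge> 1"
  shows "(\<Sum>m = 1..n. int (q_psi m) * Omega m (int n - int m)) =
    (if odd n then - omega (int n) else - omega (int n) + omega (int (n div 2)))"
proof -
  let ?E = "(\<Prod>i=1..n. 1 - (fps_X::int fps)^i)"
  let ?Q = "(\<Prod>i=1..n. 1 + (fps_X::int fps)^i)"
  have "(\<Sum>m = 1..n. int (q_psi m) * Omega m (int n - int m)) =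
     (\<Sum>m = 1..n. \<Sum>t=1..n. if m dvd t then int (q_psi m) * ?E $ (n - t) else 0)"
    by (rule sum.cong) (auto simp: Omega_expand sum_distrib_left intro!: sum.cong)
  also have "\<dots> = (\<Sum>t = 1..n. \<Sum>m=1..n. if m dvd t then int (q_psi m) * ?E $ (n - t) else 0)"
    by (rule sum.swap)
  also have "\<dots> = (\<Sum>t = 1..n. ?Q $ t * ?E $ (n - t))"
  proof (rule sum.cong)
    fix t assume t: "t \<in> {1..n}"
    have "(\<Sum>m=1..n. if m dvd t then int (q_psi m) * ?E $ (n - t) else 0) =
        (\<Sum>m\<in>{m\<in>{1..n}. m dvd t}. int (q_psi m) * ?E $ (n - t))"
      by (rule sum.inter_filter[symmetric]) simp
    also have "{m\<in>{1..n}. m dvd t} = {m\<in>{1..t}. m dvd t}"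
      using t by (auto dest: dvd_imp_le)
    also have "(\<Sum>m\<in>{m\<in>{1..t}. m dvd t}. int (q_psi m) * ?E $ (n - t)) = ?Q $ t * ?E $ (n - t)"
      using Qcoef_pos[of t n] t by (simp add: sum_distrib_right)
    finally show "(\<Sum>m=1..n. if m dvd t then int (q_psi m) * ?E $ (n - t) else 0) = ?Q $ t * ?E $ (n - t)" .
  qed simp
  also have "\<dots> = (?Q * ?E) $ n - ?E $ n"
  proof -
    have "(?Q * ?E) $ n = (\<Sum>i=0..n. ?Q $ i * ?E $ (n - i))" by (rule fps_mult_nth)
    also have "\<dots> = ?Q $ 0 * ?E $ (n - 0) + (\<Sum>i=1..n. ?Q $ i * ?E $ (n - i))"
      by (simp add: sum.atLeast_Suc_atMost)
    finally show ?thesis using Qcoef0[of n] by simp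
  qed
  also have "(?Q * ?E) $ n = (if 2 dvd n then omega (int (n div 2)) else 0)"
    unfolding EQ by (rule prod_coeff) auto
  also have "?E $ n = omega (int n)" by (rule Ecoef) simp
  finally show ?thesis by auto
qed

end
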